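(* Let $I_2^P\subset\mathbb C[d,\bar k,l,r,\bar t,\bar x]$ be the ideal generated by $b^P=\sum_{i=1}^3(P_0x_i-P_i)^2-d^2P_0^2$, $\nu_{(i,j)}^P=n_i(P_0x_j-P_j)-n_j(P_0x_i-P_i)$ for $1\le i<j\le3$, $w^P=rP_0\beta h-1$, and $\ell_i=x_i-k_il$ for $i=1,2,3$. Then $s_0,s_1,s_2,s_3\in I_2^P\cap\mathbb C[d,\bar k,\bar t]$. Consequently, if $(l^o,r^o,\bar t^o,\bar x^o)$ is a solution of these eight equations with $(d,\bar k)=(d^o,\bar k^o)$, then $s_1=s_2=s_3=0$ at $(d^o,\bar k^o,\bar t^o)$.
   Context: $P=(P_1/P_0,P_2/P_0,P_3/P_0)$ with $P_i\in\mathbb C[t_1,t_2]$, $\gcd(P_0,\dots,P_3)=1$, is a rational parametrization of a surface $\Sigma$ defined by an irreducible $f\in\mathbb C[y_1,y_2,y_3]$. $n_i=A_i/\gcd(A_1,A_2,A_3)$ where $\frac{\partial P}{\partial t_1}\wedge\frac{\partial P}{\partial t_2}=(A_1,A_2,A_3)/A_0$ (cross product); $h=n_1^2+n_2^2+n_3^2$; $\beta\in\mathbb C[\bar t]$ is a nonzero polynomial with $\gcd(\beta,P_0)=1$ and $f_i(P)=\beta P_0^{-\mu}n_i$ for some $\mu\in\mathbb N$. $\bar k=(k_1,k_2,k_3)$, $d,l,r$ are variables. $s_0=k_1(P_2n_3-P_3n_2)-k_2(P_1n_3-P_3n_1)+k_3(P_1n_2-P_2n_1)$; $s_1=h(k_2P_3-k_3P_2)^2-d^2P_0^2(k_2n_3-k_3n_2)^2$;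 $s_2=h(k_1P_3-k_3P_1)^2-d^2P_0^2(k_1n_3-k_3n_1)^2$; $s_3=h(k_1P_2-k_2P_1)^2-d^2P_0^2(k_1n_2-k_2n_1)^2$. *)

theory Defs
  imports "HOL-Analysis.Analysis"
begin

text \<open>Multivariate polynomials over the complex numbers are represented as polynomial
  functions (the complex field is infinite, so polynomial functions and polynomials coincide).
  Polynomials in the t-variables (the P_i, n_i, beta, h) and in the y-variables (f; we reuse
  the names x1,x2,x3 for y1,y2,y3) are elements of this ring depending only on those variables.\<close>

datatype var = Vd | Vk1 | Vk2 | Vk3 | Vl | Vr | Vt1 | Vt2 | Vx1 | Vx2 | Vx3

type_synonym pf = "(var \<Rightarrow> complex) \<Rightarrow> complex"

inductive_set mpoly :: "pf set" where
  mp_const: "(\<lambda>_. c) \<in> mpoly"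
| mp_var: "(\<lambda>a. a v) \<in> mpoly"
| mp_add: "p \<in> mpoly \<Longrightarrow> q \<in> mpoly \<Longrightarrow> (\<lambda>a. p a + q a) \<in> mpoly"
| mp_mult: "p \<in> mpoly \<Longrightarrow> q \<in> mpoly \<Longrightarrow> (\<lambda>a. p a * q a) \<in> mpoly"

definition depends_only :: "var set \<Rightarrow> pf \<Rightarrow> bool" where
  "depends_only V p \<longleftrightarrow> (\<forall>a b. (\<forall>v\<in>V. a v = b v) \<longrightarrow> p a = p b)"

definition in_subring :: "var set \<Rightarrow> pf \<Rightarrow> bool" where
  "in_subring V p \<longleftrightarrow> p \<in> mpoly \<and> depends_only V p"

definition tvars :: "var set" where "tvars = {Vt1, Vt2}"
definition yvars :: "var set" where "yvars = {Vx1, Vx2, Vx3}"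

definition ideal_gen :: "pf list \<Rightarrow> pf set" where
  "ideal_gen G = {p. \<exists>cs. length cs = length G \<and> set cs \<subseteq> mpoly \<and>
      p = (\<lambda>a. \<Sum>i<length G. (cs ! i) a * (G ! i) a)}"

definition pdvd :: "pf \<Rightarrow> pf \<Rightarrow> bool" where
  "pdvd q p \<longleftrightarrow> (\<exists>c\<in>mpoly. p = (\<lambda>a. q a * c a))"

definition is_const :: "pf \<Rightarrow> bool" where
  "is_const p \<longleftrightarrow> (\<exists>c. p = (\<lambda>_. c))"

definition coprime_family :: "pf set \<Rightarrow> bool" where
  "coprime_family F \<longleftrightarrow> (\<forall>q\<in>mpoly. (\<forall>p\<in>F. pdvd q p) \<longrightarrow> (\<exists>c. c \<noteq> 0 \<and> q = (\<lambda>_. c)))"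

definition is_gcd :: "pf \<Rightarrow> pf set \<Rightarrow> bool" where
  "is_gcd g F \<longleftrightarrow> g \<in> mpoly \<and> (\<forall>p\<in>F. pdvd g p) \<and> (\<forall>q\<in>mpoly. (\<forall>p\<in>F. pdvd q p) \<longrightarrow> pdvd q g)"

definition irreducible_poly :: "pf \<Rightarrow> bool" where
  "irreducible_poly f \<longleftrightarrow> f \<in> mpoly \<and> \<not> is_const f \<and>
     (\<forall>a\<in>mpoly. \<forall>b\<in>mpoly. f = (\<lambda>z. a z * b z) \<longrightarrow> is_const a \<or> is_const b)"

definition pd :: "var \<Rightarrow> pf \<Rightarrow> pf" where
  "pd v F = (\<lambda>a. deriv (\<lambda>s. F (a(v := s))) (a v))"

definition xv :: "nat \<Rightarrow> var" where
  "xv i = (if i = 1 then Vx1 else if i = 2 then Vx2 else Vx3)"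
definition kv :: "nat \<Rightarrow> var" where
  "kv i = (if i = 1 then Vk1 else if i = 2 then Vk2 else Vk3)"
definition tv :: "nat \<Rightarrow> var" where
  "tv j = (if j = 1 then Vt1 else Vt2)"

definition at_P :: "(nat \<Rightarrow> pf) \<Rightarrow> (var \<Rightarrow> complex) \<Rightarrow> (var \<Rightarrow> complex)" where
  "at_P P a = a(Vx1 := P 1 a / P 0 a, Vx2 := P 2 a / P 0 a, Vx3 := P 3 a / P 0 a)"

text \<open>P0^2 * d(P_i/P0)/dt_j\<close>
definition Qd :: "(nat \<Rightarrow> pf) \<Rightarrow> nat \<Rightarrow> nat \<Rightarrow> pf" where
  "Qd P j i = (\<lambda>a. pd (tv j) (P i) a * P 0 a - P i a * pd (tv j) (P 0) a)"

text \<open>P0^4 times the cross product (dP/dt1) x (dP/dt2).\<close>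
definition crossQ :: "(nat \<Rightarrow> pf) \<Rightarrow> nat \<Rightarrow> pf" where
  "crossQ P i = (\<lambda>a.
     if i = 1 then Qd P 1 2 a * Qd P 2 3 a - Qd P 1 3 a * Qd P 2 2 a
     else if i = 2 then Qd P 1 3 a * Qd P 2 1 a - Qd P 1 1 a * Qd P 2 3 a
     else Qd P 1 1 a * Qd P 2 2 a - Qd P 1 2 a * Qd P 2 1 a)"

definition setting :: "pf \<Rightarrow> (nat \<Rightarrow> pf) \<Rightarrow> (nat \<Rightarrow> pf) \<Rightarrow> pf \<Rightarrow> nat \<Rightarrow> bool" where
  "setting f P n \<beta> \<mu> \<longleftrightarrow>
     (\<forall>i\<le>3. in_subring tvars (P i)) \<and> P 0 \<noteq> (\<lambda>_. 0) \<and>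
     coprime_family {P 0, P 1, P 2, P 3} \<and>
     irreducible_poly f \<and> depends_only yvars f \<and>
     (\<forall>a. P 0 a \<noteq> 0 \<longrightarrow> f (at_P P a) = 0) \<and>
     (\<exists>A0 A g. in_subring tvars A0 \<and> A0 \<noteq> (\<lambda>_. 0) \<and>
        (\<forall>i\<in>{1,2,3}. in_subring tvars (A i) \<and>
            (\<forall>a. A i a * (P 0 a)^4 = A0 a * crossQ P i a)) \<and>
        is_gcd g {A 1, A 2, A 3} \<and> g \<noteq> (\<lambda>_. 0) \<and>
        (\<forall>i\<in>{1,2,3}. in_subring tvars (n i) \<and> (\<forall>a. n i a * g a = A i a))) \<and>
     in_subring tvars \<beta> \<and> \<beta> \<noteq> (\<lambda>_. 0) \<and> coprime_family {\<beta>, P 0} \<and>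
     (\<forall>i\<in>{1,2,3}. \<forall>a. P 0 a \<noteq> 0 \<longrightarrow>
        pd (xv i) f (at_P P a) * (P 0 a)^\<mu> = \<beta> a * n i a)"

definition hP :: "(nat \<Rightarrow> pf) \<Rightarrow> pf" where
  "hP n = (\<lambda>a. (n 1 a)^2 + (n 2 a)^2 + (n 3 a)^2)"

definition bP :: "(nat \<Rightarrow> pf) \<Rightarrow> pf" where
  "bP P = (\<lambda>a. (\<Sum>i\<in>{1..3::nat}. (P 0 a * a (xv i) - P i a)^2) - (a Vd)^2 * (P 0 a)^2)"

definition nuP :: "(nat \<Rightarrow> pf) \<Rightarrow> (nat \<Rightarrow> pf) \<Rightarrow> nat \<Rightarrow> nat \<Rightarrow> pf" where
  "nuP P n i j = (\<lambda>a. n i a * (P 0 a * a (xv j) - P j a) - n j a * (P 0 a * a (xv i) - P i a))"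

definition wP :: "(nat \<Rightarrow> pf) \<Rightarrow> (nat \<Rightarrow> pf) \<Rightarrow> pf \<Rightarrow> pf" where
  "wP P n \<beta> = (\<lambda>a. a Vr * P 0 a * \<beta> a * hP n a - 1)"

definition ellP :: "nat \<Rightarrow> pf" where
  "ellP i = (\<lambda>a. a (xv i) - a (kv i) * a Vl)"

definition I2_gens :: "(nat \<Rightarrow> pf) \<Rightarrow> (nat \<Rightarrow> pf) \<Rightarrow> pf \<Rightarrow> pf list" where
  "I2_gens P n \<beta> = [bP P, nuP P n 1 2, nuP P n 1 3, nuP P n 2 3, wP P n \<beta>, ellP 1, ellP 2, ellP 3]"

definition s0 :: "(nat \<Rightarrow> pf) \<Rightarrow> (nat \<Rightarrow> pf) \<Rightarrow> pf" where
  "s0 P n = (\<lambda>a. a Vk1 * (P 2 a * n 3 a - P 3 a * n 2 a) - a Vk2 * (P 1 a * n 3 a - P 3 a * n 1 a)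
                 + a Vk3 * (P 1 a * n 2 a - P 2 a * n 1 a))"

definition s1 :: "(nat \<Rightarrow> pf) \<Rightarrow> (nat \<Rightarrow> pf) \<Rightarrow> pf" where
  "s1 P n = (\<lambda>a. hP n a * (a Vk2 * P 3 a - a Vk3 * P 2 a)^2
                 - (a Vd)^2 * (P 0 a)^2 * (a Vk2 * n 3 a - a Vk3 * n 2 a)^2)"

definition s2 :: "(nat \<Rightarrow> pf) \<Rightarrow> (nat \<Rightarrow> pf) \<Rightarrow> pf" where
  "s2 P n = (\<lambda>a. hP n a * (a Vk1 * P 3 a - a Vk3 * P 1 a)^2
                 - (a Vd)^2 * (P 0 a)^2 * (a Vk1 * n 3 a - a Vk3 * n 1 a)^2)"

definition s3 :: "(nat \<Rightarrow> pf) \<Rightarrow> (nat \<Rightarrow> pf) \<Rightarrow> pf" where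
  "s3 P n = (\<lambda>a. hP n a * (a Vk1 * P 2 a - a Vk2 * P 1 a)^2
                 - (a Vd)^2 * (P 0 a)^2 * (a Vk1 * n 2 a - a Vk2 * n 1 a)^2)"

definition dktvars :: "var set" where "dktvars = {Vd, Vk1, Vk2, Vk3, Vt1, Vt2}"

end

theory Submission
  imports Defs
begin

lemma gen_id:
  fixes P0 P1 P2 P3 n1 n2 n3 x1 x2 x3 k1 k2 k3 l d a1 a2 a3 :: complex
  assumes "a1*k1+a2*k2+a3*k3 = 0"
  shows "(n1^2+n2^2+n3^2) * (a1*P1+a2*P2+a3*P3)^2 - d^2*P0^2*(a1*n1+a2*n2+a3*n3)^2
   = (a1*n1+a2*n2+a3*n3)^2 * ((P0*x1-P1)^2+(P0*x2-P2)^2+(P0*x3-P3)^2 - d^2*P0^2)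
   + (a2*(n1*(a1*(P0*x1-P1)+a2*(P0*x2-P2)+a3*(P0*x3-P3)) + (a1*n1+a2*n2+a3*n3)*(P0*x1-P1))
     - a1*(n2*(a1*(P0*x1-P1)+a2*(P0*x2-P2)+a3*(P0*x3-P3)) + (a1*n1+a2*n2+a3*n3)*(P0*x2-P2)))
     * (n1*(P0*x2-P2) - n2*(P0*x1-P1))
   + (a3*(n1*(a1*(P0*x1-P1)+a2*(P0*x2-P2)+a3*(P0*x3-P3)) + (a1*n1+a2*n2+a3*n3)*(P0*x1-P1))
     - a1*(n3*(a1*(P0*x1-P1)+a2*(P0*x2-P2)+a3*(P0*x3-P3)) + (a1*n1+a2*n2+a3*n3)*(P0*x3-P3)))
     * (n1*(P0*x3-P3) - n3*(P0*x1-P1))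
   + (a3*(n2*(a1*(P0*x1-P1)+a2*(P0*x2-P2)+a3*(P0*x3-P3)) + (a1*n1+a2*n2+a3*n3)*(P0*x2-P2))
     - a2*(n3*(a1*(P0*x1-P1)+a2*(P0*x2-P2)+a3*(P0*x3-P3)) + (a1*n1+a2*n2+a3*n3)*(P0*x3-P3)))
     * (n2*(P0*x3-P3) - n3*(P0*x2-P2))
   + 0 * ((n1^2+n2^2+n3^2) * P0)
   + (n1^2+n2^2+n3^2) * ((a1*P1+a2*P2+a3*P3) - (a1*(P0*x1-P1)+a2*(P0*x2-P2)+a3*(P0*x3-P3))) * P0 * a1 * (x1-k1*l)
   + (n1^2+n2^2+n3^2) * ((a1*P1+a2*P2+a3*P3) - (a1*(P0*x1-P1)+a2*(P0*x2-P2)+a3*(P0*x3-P3))) * P0 * a2 * (x2-k2*l)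
   + (n1^2+n2^2+n3^2) * ((a1*P1+a2*P2+a3*P3) - (a1*(P0*x1-P1)+a2*(P0*x2-P2)+a3*(P0*x3-P3))) * P0 * a3 * (x3-k3*l)"
  using assms by algebra

lemma s0_id:
  fixes P0 P1 P2 P3 n1 n2 n3 x1 x2 x3 k1 k2 k3 l d w b :: complex
  shows "k1*(P2*n3-P3*n2) - k2*(P1*n3-P3*n1) + k3*(P1*n2-P2*n1)
   = 0 * b + k3*(n1*(P0*x2-P2) - n2*(P0*x1-P1)) + (- k2)*(n1*(P0*x3-P3) - n3*(P0*x1-P1))
     + k1*(n2*(P0*x3-P3) - n3*(P0*x2-P2)) + 0 * w
     + P0*(k3*n2-k2*n3)*(x1-k1*l) + P0*(k1*n3-k3*n1)*(x2-k2*l) + P0*(k2*n1-k1*n2)*(x3-k3*l)"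
  by algebra

lemma mp_diff: "p \<in> mpoly \<Longrightarrow> q \<in> mpoly \<Longrightarrow> (\<lambda>a. p a - q a) \<in> mpoly"
proof -
  assume "p \<in> mpoly" "q \<in> mpoly"
  have "(\<lambda>a. (-1::complex) * q a) \<in> mpoly" by (rule mp_mult[OF mp_const \<open>q \<in> mpoly\<close>])
  from mp_add[OF \<open>p \<in> mpoly\<close> this] show ?thesis by simp
qed

lemma mp_uminus: "q \<in> mpoly \<Longrightarrow> (\<lambda>a. - q a) \<in> mpoly"
  using mp_diff[OF mp_const[of 0]] by simp

lemma mp_pow: "p \<in> mpoly \<Longrightarrow> (\<lambda>a. p a ^ k) \<in> mpoly"
proof (induction k)
  case 0 show ?case using mp_const[of 1] by simp
next
  case (Suc k) then show ?case using mp_mult[OF Suc.prems Suc.IH] by simp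
qed

lemma mp_fun: "p \<in> mpoly \<Longrightarrow> (\<lambda>a. p a) \<in> mpoly" by simp

lemmas mp_intros = mp_const mp_var mp_add mp_mult mp_diff mp_uminus mp_pow

lemma ideal8:
  assumes "c0 \<in> mpoly" "c1 \<in> mpoly" "c2 \<in> mpoly" "c3 \<in> mpoly"
          "c4 \<in> mpoly" "c5 \<in> mpoly" "c6 \<in> mpoly" "c7 \<in> mpoly"
  and "\<And>a. s a = c0 a * g0 a + c1 a * g1 a + c2 a * g2 a + c3 a * g3 a
               + c4 a * g4 a + c5 a * g5 a + c6 a * g6 a + c7 a * g7 a"
  shows "s \<in> ideal_gen [g0,g1,g2,g3,g4,g5,g6,g7]"
  unfolding ideal_gen_def
  apply (rule CollectI)
  apply (rule exI[of _ "[c0,c1,c2,c3,c4,c5,c6,c7]"])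
  using assms by (auto simp: eval_nat_numeral ac_simps)

lemma ideal_zero:
  assumes "s \<in> ideal_gen G" "\<forall>g\<in>set G. g a = 0"
  shows "s a = 0"
proof -
  from assms(1) obtain cs where cs: "length cs = length G"
    "s = (\<lambda>a. \<Sum>i<length G. (cs ! i) a * (G ! i) a)" unfolding ideal_gen_def by blast
  have "\<And>i. i < length G \<Longrightarrow> (G ! i) a = 0" using assms(2) nth_mem by blast
  then show ?thesis using cs(2) by simp
qed

lemma sgen:
  assumes A: "A1 \<in> mpoly" "A2 \<in> mpoly" "A3 \<in> mpoly"
    and Ak: "\<And>a. A1 a * a Vk1 + A2 a * a Vk2 + A3 a * a Vk3 = 0"
    and P: "\<And>i. i \<le> 3 \<Longrightarrow> P i \<in> mpoly"
    and N: "\<And>i. i \<in> {1,2,3} \<Longrightarrow> n i \<in> mpoly"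
  shows "(\<lambda>a. hP n a * (A1 a * P 1 a + A2 a * P 2 a + A3 a * P 3 a)^2
      - (a Vd)^2 * (P 0 a)^2 * (A1 a * n 1 a + A2 a * n 2 a + A3 a * n 3 a)^2)
    \<in> ideal_gen (I2_gens P n \<beta>)"
proof -
  have P0: "P 0 \<in> mpoly" and P1: "P 1 \<in> mpoly" and P2: "P 2 \<in> mpoly" and P3: "P 3 \<in> mpoly"
    using P by auto
  have N1: "n 1 \<in> mpoly" and N2: "n 2 \<in> mpoly" and N3: "n 3 \<in> mpoly" using N by auto
  note ms = A P0 P1 P2 P3 N1 N2 N3
  define X1 where "X1 = (\<lambda>a. P 0 a * a Vx1 - P 1 a)"
  define X2 where "X2 = (\<lambda>a. P 0 a * a Vx2 - P 2 a)"
  define X3 where "X3 = (\<lambda>a. P 0 a * a Vx3 - P 3 a)"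
  define m where "m = (\<lambda>a. A1 a * X1 a + A2 a * X2 a + A3 a * X3 a)"
  define c where "c = (\<lambda>a. A1 a * n 1 a + A2 a * n 2 a + A3 a * n 3 a)"
  define u where "u = (\<lambda>a. A1 a * P 1 a + A2 a * P 2 a + A3 a * P 3 a)"
  define h where "h = (\<lambda>a. (n 1 a)^2 + (n 2 a)^2 + (n 3 a)^2)"
  define cl where "cl = (\<lambda>a. h a * (u a - m a) * P 0 a)"
  have mX: "X1 \<in> mpoly" "X2 \<in> mpoly" "X3 \<in> mpoly" unfolding X1_def X2_def X3_def
    by (intro mp_intros ms)+
  have mm: "m \<in> mpoly" "c \<in> mpoly" "u \<in> mpoly" "h \<in> mpoly"
    unfolding m_def c_def u_def h_def by (intro mp_intros ms mX)+
  have mcl: "cl \<in> mpoly" unfolding cl_def by (intro mp_intros ms mm)+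
  show ?thesis unfolding I2_gens_def
    apply (rule ideal8[of "\<lambda>a. (c a)^2"
      "\<lambda>a. A2 a*(n 1 a * m a + c a * X1 a) - A1 a*(n 2 a * m a + c a * X2 a)"
      "\<lambda>a. A3 a*(n 1 a * m a + c a * X1 a) - A1 a*(n 3 a * m a + c a * X3 a)"
      "\<lambda>a. A3 a*(n 2 a * m a + c a * X2 a) - A2 a*(n 3 a * m a + c a * X3 a)"
      "\<lambda>a. 0"
      "\<lambda>a. cl a * A1 a" "\<lambda>a. cl a * A2 a" "\<lambda>a. cl a * A3 a"])
    apply (intro mp_intros ms mm mcl mX)+
    subgoal for a
      using Ak[of a] unfolding bP_def nuP_def wP_def ellP_def hP_def cl_def h_def u_def m_def c_def X1_def X2_def X3_def
      by (simp add: xv_def kv_def eval_nat_numeral) algebra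
    done
qed

lemma dep_sub:
  assumes D: "depends_only tvars p" and H: "\<forall>v\<in>dktvars. a v = b v"
  shows "p a = p b"
proof -
  have "\<forall>v\<in>tvars. a v = b v" using H unfolding tvars_def dktvars_def by simp
  then show ?thesis using D unfolding depends_only_def by blast
qed

theorem mainTheorem14:
  fixes f \<beta> :: pf and P n :: "nat \<Rightarrow> pf" and \<mu> :: nat
  assumes "setting f P n \<beta> \<mu>"
  shows "(\<forall>s\<in>{s0 P n, s1 P n, s2 P n, s3 P n}.
            s \<in> ideal_gen (I2_gens P n \<beta>) \<and> in_subring dktvars s)
       \<and> (\<forall>a. (\<forall>g\<in>set (I2_gens P n \<beta>). g a = 0) \<longrightarrow>
              s1 P n a = 0 \<and> s2 P n a = 0 \<and> s3 P n a = 0)"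
proof -
  have PN: "(\<forall>i\<le>3. in_subring tvars (P i)) \<and> (\<forall>i\<in>{1,2,3}. in_subring tvars (n i))"
    using assms unfolding setting_def by (elim conjE exE) simp
  have Ps: "in_subring tvars (P i)" if "i \<le> 3" for i
    using PN that by simp
  have Ns: "in_subring tvars (n i)" if "i \<in> {1,2,3}" for i
    using PN that by auto
  have P0: "P 0 \<in> mpoly" and P1: "P 1 \<in> mpoly" and P2: "P 2 \<in> mpoly" and P3: "P 3 \<in> mpoly"
    using Ps[of 0] Ps[of 1] Ps[of 2] Ps[of 3] unfolding in_subring_def by simp_all
  have N1: "n 1 \<in> mpoly" and N2: "n 2 \<in> mpoly" and N3: "n 3 \<in> mpoly"
    using Ns[of 1] Ns[of 2] Ns[of 3] unfolding in_subring_def by simp_all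
  have P: "P i \<in> mpoly" if "i \<le> 3" for i using Ps[OF that] unfolding in_subring_def by simp
  have N: "n i \<in> mpoly" if "i \<in> {1,2,3}" for i using Ns[OF that] unfolding in_subring_def by simp
  note ms = P0 P1 P2 P3 N1 N2 N3
  have dP: "P i a = P i b" if "i \<le> 3" "\<forall>v\<in>dktvars. a v = b v" for i a b
    using dep_sub[of "P i" a b] Ps[OF that(1)] that(2) unfolding in_subring_def by simp
  have dN: "n i a = n i b" if "i \<in> {1,2,3}" "\<forall>v\<in>dktvars. a v = b v" for i a b
    using dep_sub[of "n i" a b] Ns[OF that(1)] that(2) unfolding in_subring_def by simp
  have eqs: "P 0 a = P 0 b \<and> P 1 a = P 1 b \<and> P 2 a = P 2 b \<and> P 3 a = P 3 b \<and>
     n 1 a = n 1 b \<and> n 2 a = n 2 b \<and> n 3 a = n 3 b \<and>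
     a Vd = b Vd \<and> a Vk1 = b Vk1 \<and> a Vk2 = b Vk2 \<and> a Vk3 = b Vk3"
    if H: "\<forall>v\<in>dktvars. a v = b v" for a b
  proof -
    have "a Vd = b Vd \<and> a Vk1 = b Vk1 \<and> a Vk2 = b Vk2 \<and> a Vk3 = b Vk3"
      using H unfolding dktvars_def by simp
    then show ?thesis using dP[of 0, OF _ H] dP[of 1, OF _ H] dP[of 2, OF _ H] dP[of 3, OF _ H]
      dN[of 1, OF _ H] dN[of 2, OF _ H] dN[of 3, OF _ H] by simp
  qed
  have I0: "s0 P n \<in> ideal_gen (I2_gens P n \<beta>)" unfolding I2_gens_def
    apply (rule ideal8[of "\<lambda>a. 0" "\<lambda>a. a Vk3" "\<lambda>a. - a Vk2" "\<lambda>a. a Vk1" "\<lambda>a. 0"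
       "\<lambda>a. P 0 a * (a Vk3 * n 2 a - a Vk2 * n 3 a)"
       "\<lambda>a. P 0 a * (a Vk1 * n 3 a - a Vk3 * n 1 a)"
       "\<lambda>a. P 0 a * (a Vk2 * n 1 a - a Vk1 * n 2 a)"])
    apply (intro mp_intros ms)+
    subgoal for a
      unfolding s0_def bP_def nuP_def wP_def ellP_def
      by (simp add: xv_def kv_def) algebra
    done
  have e1: "s1 P n = (\<lambda>a. hP n a * ((\<lambda>_. 0) a * P 1 a + (\<lambda>a. - a Vk3) a * P 2 a + (\<lambda>a. a Vk2) a * P 3 a)^2
      - (a Vd)^2 * (P 0 a)^2 * ((\<lambda>_. 0) a * n 1 a + (\<lambda>a. - a Vk3) a * n 2 a + (\<lambda>a. a Vk2) a * n 3 a)^2)"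
    unfolding s1_def by (rule ext) algebra
  have e2: "s2 P n = (\<lambda>a. hP n a * ((\<lambda>a. - a Vk3) a * P 1 a + (\<lambda>_. 0) a * P 2 a + (\<lambda>a. a Vk1) a * P 3 a)^2
      - (a Vd)^2 * (P 0 a)^2 * ((\<lambda>a. - a Vk3) a * n 1 a + (\<lambda>_. 0) a * n 2 a + (\<lambda>a. a Vk1) a * n 3 a)^2)"
    unfolding s2_def by (rule ext) algebra
  have e3: "s3 P n = (\<lambda>a. hP n a * ((\<lambda>a. - a Vk2) a * P 1 a + (\<lambda>a. a Vk1) a * P 2 a + (\<lambda>_. 0) a * P 3 a)^2
      - (a Vd)^2 * (P 0 a)^2 * ((\<lambda>a. - a Vk2) a * n 1 a + (\<lambda>a. a Vk1) a * n 2 a + (\<lambda>_. 0) a * n 3 a)^2)"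
    unfolding s3_def by (rule ext) algebra
  have I1: "s1 P n \<in> ideal_gen (I2_gens P n \<beta>)" unfolding e1
    by (rule sgen) (intro mp_intros, intro mp_intros, intro mp_intros, simp add: algebra_simps, rule P, simp, rule N, simp)
  have I2: "s2 P n \<in> ideal_gen (I2_gens P n \<beta>)" unfolding e2
    by (rule sgen) (intro mp_intros, intro mp_intros, intro mp_intros, simp add: algebra_simps, rule P, simp, rule N, simp)
  have I3: "s3 P n \<in> ideal_gen (I2_gens P n \<beta>)" unfolding e3
    by (rule sgen) (intro mp_intros, intro mp_intros, intro mp_intros, simp add: algebra_simps, rule P, simp, rule N, simp)
  have S0: "in_subring dktvars (s0 P n)" unfolding in_subring_def
  proof
    show "s0 P n \<in> mpoly" unfolding s0_def by (intro mp_intros ms)+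
    show "depends_only dktvars (s0 P n)" unfolding depends_only_def s0_def
      by (intro allI impI) (drule eqs, simp)
  qed
  have S1: "in_subring dktvars (s1 P n)" unfolding in_subring_def
  proof
    show "s1 P n \<in> mpoly" unfolding s1_def hP_def by (intro mp_intros ms)+
    show "depends_only dktvars (s1 P n)" unfolding depends_only_def s1_def hP_def
      by (intro allI impI) (drule eqs, simp)
  qed
  have S2: "in_subring dktvars (s2 P n)" unfolding in_subring_def
  proof
    show "s2 P n \<in> mpoly" unfolding s2_def hP_def by (intro mp_intros ms)+
    show "depends_only dktvars (s2 P n)" unfolding depends_only_def s2_def hP_def
      by (intro allI impI) (drule eqs, simp)
  qed
  have S3: "in_subring dktvars (s3 P n)" unfolding in_subring_def
  proof
    show "s3 P n \<in> mpoly" unfolding s3_def hP_def by (intro mp_intros ms)+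
    show "depends_only dktvars (s3 P n)" unfolding depends_only_def s3_def hP_def
      by (intro allI impI) (drule eqs, simp)
  qed
  have Z: "\<forall>a. (\<forall>g\<in>set (I2_gens P n \<beta>). g a = 0) \<longrightarrow>
              s1 P n a = 0 \<and> s2 P n a = 0 \<and> s3 P n a = 0"
  proof (intro allI impI conjI)
    fix a assume H: "\<forall>g\<in>set (I2_gens P n \<beta>). g a = 0"
    show "s1 P n a = 0" by (rule ideal_zero[OF I1 H])
    show "s2 P n a = 0" by (rule ideal_zero[OF I2 H])
    show "s3 P n a = 0" by (rule ideal_zero[OF I3 H])
  qed
  have A: "\<forall>s\<in>{s0 P n, s1 P n, s2 P n, s3 P n}.
            s \<in> ideal_gen (I2_gens P n \<beta>) \<and> in_subring dktvars s"
    using I0 I1 I2 I3 S0 S1 S2 S3 by simp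
  show ?thesis using A Z by (rule conjI)
qed

end
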